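(* Let $S$ and $T$ be monoids. Then $S\times T$ is finitely right equated if and only if both $S$ and $T$ are finitely right equated.
   Context: For a semigroup $S$ and $a\in S$, $\mathbf{r}_S(a)=\{(s,t)\in S\times S\mid as=at\}$; $S$ is finitely right equated if each $\mathbf{r}_S(a)$ is finitely generated as a right congruence (the smallest right congruence containing some finite set). *)

theory Defs
  imports Main
begin

definition right_congruence :: "('a \<Rightarrow> 'a \<Rightarrow> 'a) \<Rightarrow> ('a \<times> 'a) set \<Rightarrow> bool" where
  "right_congruence mul \<rho> \<longleftrightarrow> equiv UNIV \<rho> \<and>
     (\<forall>s t u. (s, t) \<in> \<rho> \<longrightarrow> (mul s u, mul t u) \<in> \<rho>)"

definition right_cong_gen :: "('a \<Rightarrow> 'a \<Rightarrow> 'a) \<Rightarrow> ('a \<times> 'a) set \<Rightarrow> ('a \<times> 'a) set" where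
  "right_cong_gen mul X = \<Inter> {\<rho>. right_congruence mul \<rho> \<and> X \<subseteq> \<rho>}"

definition r_ann :: "('a \<Rightarrow> 'a \<Rightarrow> 'a) \<Rightarrow> 'a \<Rightarrow> ('a \<times> 'a) set" where
  "r_ann mul a = {(s, t). mul a s = mul a t}"

definition finitely_right_equated :: "('a \<Rightarrow> 'a \<Rightarrow> 'a) \<Rightarrow> bool" where
  "finitely_right_equated mul \<longleftrightarrow>
     (\<forall>a. \<exists>X. finite X \<and> r_ann mul a = right_cong_gen mul X)"

definition prod_mult :: "('a \<Rightarrow> 'a \<Rightarrow> 'a) \<Rightarrow> ('b \<Rightarrow> 'b \<Rightarrow> 'b) \<Rightarrow>
    ('a \<times> 'b) \<Rightarrow> ('a \<times> 'b) \<Rightarrow> ('a \<times> 'b)" where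
  "prod_mult m1 m2 x y = (m1 (fst x) (fst y), m2 (snd x) (snd y))"

end

theory Submission
  imports Defs
begin

lemma gen_least: "right_congruence mul \<rho> \<Longrightarrow> X \<subseteq> \<rho> \<Longrightarrow> right_cong_gen mul X \<subseteq> \<rho>"
  unfolding right_cong_gen_def by blast

lemma gen_sub: "X \<subseteq> right_cong_gen mul X"
  unfolding right_cong_gen_def by blast


lemma rc_intro:
  assumes "\<And>x. (x,x) \<in> \<rho>" "\<And>x y. (x,y) \<in> \<rho> \<Longrightarrow> (y,x) \<in> \<rho>"
    "\<And>x y z. (x,y) \<in> \<rho> \<Longrightarrow> (y,z) \<in> \<rho> \<Longrightarrow> (x,z) \<in> \<rho>"
    "\<And>s t u. (s,t) \<in> \<rho> \<Longrightarrow> (mul s u, mul t u) \<in> \<rho>"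
  shows "right_congruence mul \<rho>"
  unfolding right_congruence_def equiv_def
proof (intro conjI)
  show "\<rho> \<subseteq> UNIV \<times> UNIV" by simp
  show "refl_on UNIV \<rho>" using assms(1) by (auto intro: refl_onI)
  show "sym \<rho>" using assms(2) by (auto intro: symI)
  show "trans \<rho>" using assms(3) by (blast intro: transI)
  show "\<forall>s t u. (s, t) \<in> \<rho> \<longrightarrow> (mul s u, mul t u) \<in> \<rho>" using assms(4) by blast
qed

lemma rc_elim:
  assumes "right_congruence mul \<rho>"
  shows "(x,x) \<in> \<rho>" "(x,y) \<in> \<rho> \<Longrightarrow> (y,x) \<in> \<rho>"
    "(x,y) \<in> \<rho> \<Longrightarrow> (y,z) \<in> \<rho> \<Longrightarrow> (x,z) \<in> \<rho>"
    "(s,t) \<in> \<rho> \<Longrightarrow> (mul s u, mul t u) \<in> \<rho>"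
proof -
  have e: "equiv UNIV \<rho>" and c: "\<forall>s t u. (s, t) \<in> \<rho> \<longrightarrow> (mul s u, mul t u) \<in> \<rho>"
    using assms unfolding right_congruence_def by auto
  show "(x,x) \<in> \<rho>" using e by (meson equiv_def iso_tuple_UNIV_I refl_onD)
  show "(x,y) \<in> \<rho> \<Longrightarrow> (y,x) \<in> \<rho>" using e by (meson equiv_def symD)
  show "(x,y) \<in> \<rho> \<Longrightarrow> (y,z) \<in> \<rho> \<Longrightarrow> (x,z) \<in> \<rho>" using e by (meson equiv_def transD)
  show "(s,t) \<in> \<rho> \<Longrightarrow> (mul s u, mul t u) \<in> \<rho>" using c by blast
qed

lemma gen_mem: "(x,y) \<in> right_cong_gen mul X \<Longrightarrow> right_congruence mul \<rho> \<Longrightarrow> X \<subseteq> \<rho> \<Longrightarrow> (x,y) \<in> \<rho>"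
  using gen_least by blast

lemma gen_memI: "(\<And>\<rho>. right_congruence mul \<rho> \<Longrightarrow> X \<subseteq> \<rho> \<Longrightarrow> (x,y) \<in> \<rho>) \<Longrightarrow> (x,y) \<in> right_cong_gen mul X"
  unfolding right_cong_gen_def by blast

lemma gen_cong: "right_congruence mul (right_cong_gen mul X)"
proof (rule rc_intro)
  show "\<And>x. (x,x) \<in> right_cong_gen mul X"
    by (rule gen_memI) (rule rc_elim(1))
  show "\<And>x y. (x,y) \<in> right_cong_gen mul X \<Longrightarrow> (y,x) \<in> right_cong_gen mul X"
  proof (rule gen_memI)
    fix x y \<rho> assume "(x,y) \<in> right_cong_gen mul X" "right_congruence mul \<rho>" "X \<subseteq> \<rho>"
    then show "(y,x) \<in> \<rho>" using gen_mem rc_elim(2) by metis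
  qed
  show "\<And>x y z. (x,y) \<in> right_cong_gen mul X \<Longrightarrow> (y,z) \<in> right_cong_gen mul X \<Longrightarrow> (x,z) \<in> right_cong_gen mul X"
  proof (rule gen_memI)
    fix x y z \<rho> assume "(x,y) \<in> right_cong_gen mul X" "(y,z) \<in> right_cong_gen mul X" "right_congruence mul \<rho>" "X \<subseteq> \<rho>"
    then show "(x,z) \<in> \<rho>" using gen_mem rc_elim(3) by metis
  qed
  show "\<And>s t u. (s,t) \<in> right_cong_gen mul X \<Longrightarrow> (mul s u, mul t u) \<in> right_cong_gen mul X"
  proof (rule gen_memI)
    fix s t u \<rho> assume "(s,t) \<in> right_cong_gen mul X" "right_congruence mul \<rho>" "X \<subseteq> \<rho>"
    then show "(mul s u, mul t u) \<in> \<rho>" using gen_mem rc_elim(4) by metis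
  qed
qed

lemma r_ann_cong: "right_congruence ((*) :: 'a::semigroup_mult \<Rightarrow> _) (r_ann (*) a)"
proof (rule rc_intro)
  show "\<And>x. (x,x) \<in> r_ann (*) a" by (simp add: r_ann_def)
  show "\<And>x y. (x,y) \<in> r_ann (*) a \<Longrightarrow> (y,x) \<in> r_ann (*) a" by (simp add: r_ann_def)
  show "\<And>x y z. (x,y) \<in> r_ann (*) a \<Longrightarrow> (y,z) \<in> r_ann (*) a \<Longrightarrow> (x,z) \<in> r_ann (*) a" by (simp add: r_ann_def)
  show "\<And>s t u. (s,t) \<in> r_ann (*) a \<Longrightarrow> (s * u, t * u) \<in> r_ann (*) a"
    by (simp add: r_ann_def) (metis mult.assoc)
qed

lemma r_ann_prod_cong:
  "right_congruence (prod_mult ((*) :: 'a::semigroup_mult \<Rightarrow> _) ((*) :: 'b::semigroup_mult \<Rightarrow> _))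
     (r_ann (prod_mult (*) (*)) a)"
proof (rule rc_intro)
  let ?R = "r_ann (prod_mult ((*) :: 'a \<Rightarrow> _) ((*) :: 'b \<Rightarrow> _)) a"
  show "\<And>x. (x,x) \<in> ?R" by (simp add: r_ann_def)
  show "\<And>x y. (x,y) \<in> ?R \<Longrightarrow> (y,x) \<in> ?R" by (simp add: r_ann_def)
  show "\<And>x y z. (x,y) \<in> ?R \<Longrightarrow> (y,z) \<in> ?R \<Longrightarrow> (x,z) \<in> ?R" by (simp add: r_ann_def)
  show "\<And>s t u. (s,t) \<in> ?R \<Longrightarrow> (prod_mult (*) (*) s u, prod_mult (*) (*) t u) \<in> ?R"
    by (simp add: r_ann_def prod_mult_def) (metis mult.assoc)
qed

lemma left_dir:
  assumes "finitely_right_equated (prod_mult ((*) :: 'a::monoid_mult \<Rightarrow> 'a \<Rightarrow> 'a) ((*) :: 'b::monoid_mult \<Rightarrow> 'b \<Rightarrow> 'b))"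
  shows "finitely_right_equated ((*) :: 'a \<Rightarrow> 'a \<Rightarrow> 'a)"
  unfolding finitely_right_equated_def
proof
  fix a :: 'a
  obtain Z where Zf: "finite Z" and Z: "r_ann (prod_mult (*) (*)) (a, 1::'b) = right_cong_gen (prod_mult (*) (*)) Z"
    using assms unfolding finitely_right_equated_def by blast
  define X where "X = (\<lambda>(p,q). (fst p, fst q)) ` Z"
  have XZ: "X \<subseteq> r_ann (*) a"
  proof
    fix x assume "x \<in> X"
    then obtain p q where pq: "(p,q) \<in> Z" "x = (fst p, fst q)" unfolding X_def by auto
    then have "(p,q) \<in> r_ann (prod_mult (*) (*)) (a, 1::'b)" using Z gen_sub by blast
    then show "x \<in> r_ann (*) a" using pq by (auto simp: r_ann_def prod_mult_def)
  qed
  have "r_ann (*) a = right_cong_gen (*) X"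
  proof
    show "right_cong_gen (*) X \<subseteq> r_ann (*) a" by (rule gen_least[OF r_ann_cong XZ])
  next
    show "r_ann (*) a \<subseteq> right_cong_gen (*) X"
    proof
      fix st assume st: "st \<in> r_ann (*) a"
      obtain s t where sst: "st = (s,t)" by force
      define \<rho> :: "(('a\<times>'b)\<times>('a\<times>'b)) set" where "\<rho> = {(P,Q). (fst P, fst Q) \<in> right_cong_gen ((*) :: 'a \<Rightarrow> _) X}"
      have rc: "right_congruence (prod_mult ((*) :: 'a \<Rightarrow> _) ((*) :: 'b \<Rightarrow> _)) \<rho>"
      proof (rule rc_intro)
        let ?H = "right_cong_gen ((*) :: 'a \<Rightarrow> _) X"
        have H: "right_congruence (*) ?H" by (rule gen_cong)
        show "\<And>x. (x,x) \<in> \<rho>" using rc_elim(1)[OF H] by (simp add: \<rho>_def)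
        show "\<And>x y. (x,y) \<in> \<rho> \<Longrightarrow> (y,x) \<in> \<rho>" using rc_elim(2)[OF H] by (simp add: \<rho>_def)
        show "\<And>x y z. (x,y) \<in> \<rho> \<Longrightarrow> (y,z) \<in> \<rho> \<Longrightarrow> (x,z) \<in> \<rho>" using rc_elim(3)[OF H] by (simp add: \<rho>_def)
        show "\<And>s t u. (s,t) \<in> \<rho> \<Longrightarrow> (prod_mult (*) (*) s u, prod_mult (*) (*) t u) \<in> \<rho>"
          using rc_elim(4)[OF H] by (simp add: \<rho>_def prod_mult_def)
      qed
      have "Z \<subseteq> \<rho>" using gen_sub[of X "(*)"] by (force simp: \<rho>_def X_def)
      then have sub: "right_cong_gen (prod_mult (*) (*)) Z \<subseteq> \<rho>" by (rule gen_least[OF rc])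
      have "((s, 1::'b), (t, 1::'b)) \<in> r_ann (prod_mult (*) (*)) (a, 1::'b)"
        using st sst by (auto simp: r_ann_def prod_mult_def)
      then show "st \<in> right_cong_gen (*) X" using Z sub sst by (auto simp: \<rho>_def)
    qed
  qed
  moreover have "finite X" using Zf unfolding X_def by simp
  ultimately show "\<exists>X. finite X \<and> r_ann (*) a = right_cong_gen (*) X" by blast
qed

lemma right_dir:
  assumes "finitely_right_equated (prod_mult ((*) :: 'a::monoid_mult \<Rightarrow> 'a \<Rightarrow> 'a) ((*) :: 'b::monoid_mult \<Rightarrow> 'b \<Rightarrow> 'b))"
  shows "finitely_right_equated ((*) :: 'b \<Rightarrow> 'b \<Rightarrow> 'b)"
  unfolding finitely_right_equated_def
proof
  fix a :: 'b
  obtain Z where Zf: "finite Z" and Z: "r_ann (prod_mult (*) (*)) (1::'a, a) = right_cong_gen (prod_mult (*) (*)) Z"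
    using assms unfolding finitely_right_equated_def by blast
  define X where "X = (\<lambda>(p,q). (snd p, snd q)) ` Z"
  have XZ: "X \<subseteq> r_ann (*) a"
  proof
    fix x assume "x \<in> X"
    then obtain p q where pq: "(p,q) \<in> Z" "x = (snd p, snd q)" unfolding X_def by auto
    then have "(p,q) \<in> r_ann (prod_mult (*) (*)) (1::'a, a)" using Z gen_sub by blast
    then show "x \<in> r_ann (*) a" using pq by (auto simp: r_ann_def prod_mult_def)
  qed
  have "r_ann (*) a = right_cong_gen (*) X"
  proof
    show "right_cong_gen (*) X \<subseteq> r_ann (*) a" by (rule gen_least[OF r_ann_cong XZ])
  next
    show "r_ann (*) a \<subseteq> right_cong_gen (*) X"
    proof
      fix st assume st: "st \<in> r_ann (*) a"
      obtain s t where sst: "st = (s,t)" by force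
      define \<rho> :: "(('a\<times>'b)\<times>('a\<times>'b)) set" where "\<rho> = {(P,Q). (snd P, snd Q) \<in> right_cong_gen ((*) :: 'b \<Rightarrow> _) X}"
      have rc: "right_congruence (prod_mult ((*) :: 'a \<Rightarrow> _) ((*) :: 'b \<Rightarrow> _)) \<rho>"
      proof (rule rc_intro)
        let ?H = "right_cong_gen ((*) :: 'b \<Rightarrow> _) X"
        have H: "right_congruence (*) ?H" by (rule gen_cong)
        show "\<And>x. (x,x) \<in> \<rho>" using rc_elim(1)[OF H] by (simp add: \<rho>_def)
        show "\<And>x y. (x,y) \<in> \<rho> \<Longrightarrow> (y,x) \<in> \<rho>" using rc_elim(2)[OF H] by (simp add: \<rho>_def)
        show "\<And>x y z. (x,y) \<in> \<rho> \<Longrightarrow> (y,z) \<in> \<rho> \<Longrightarrow> (x,z) \<in> \<rho>" using rc_elim(3)[OF H] by (simp add: \<rho>_def)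
        show "\<And>s t u. (s,t) \<in> \<rho> \<Longrightarrow> (prod_mult (*) (*) s u, prod_mult (*) (*) t u) \<in> \<rho>"
          using rc_elim(4)[OF H] by (simp add: \<rho>_def prod_mult_def)
      qed
      have "Z \<subseteq> \<rho>" using gen_sub[of X "(*)"] by (force simp: \<rho>_def X_def)
      then have sub: "right_cong_gen (prod_mult (*) (*)) Z \<subseteq> \<rho>" by (rule gen_least[OF rc])
      have "((1::'a, s), (1::'a, t)) \<in> r_ann (prod_mult (*) (*)) (1::'a, a)"
        using st sst by (auto simp: r_ann_def prod_mult_def)
      then show "st \<in> right_cong_gen (*) X" using Z sub sst by (auto simp: \<rho>_def)
    qed
  qed
  moreover have "finite X" using Zf unfolding X_def by simp
  ultimately show "\<exists>X. finite X \<and> r_ann (*) a = right_cong_gen (*) X" by blast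
qed

lemma back_dir:
  assumes A: "finitely_right_equated ((*) :: 'a::monoid_mult \<Rightarrow> 'a \<Rightarrow> 'a)"
    and B: "finitely_right_equated ((*) :: 'b::monoid_mult \<Rightarrow> 'b \<Rightarrow> 'b)"
  shows "finitely_right_equated (prod_mult ((*) :: 'a \<Rightarrow> 'a \<Rightarrow> 'a) ((*) :: 'b \<Rightarrow> 'b \<Rightarrow> 'b))"
  unfolding finitely_right_equated_def
proof
  fix ab :: "'a \<times> 'b"
  obtain a b where ab: "ab = (a,b)" by force
  obtain X where Xf: "finite X" and X: "r_ann (*) a = right_cong_gen (*) X"
    using A unfolding finitely_right_equated_def by blast
  obtain Y where Yf: "finite Y" and Y: "r_ann (*) b = right_cong_gen (*) Y"
    using B unfolding finitely_right_equated_def by blast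
  define Z :: "(('a \<times> 'b) \<times> ('a \<times> 'b)) set" where
    "Z = (\<lambda>(x,y). ((x,1),(y,1))) ` X \<union> (\<lambda>(x,y). ((1,x),(1,y))) ` Y"
  let ?m = "prod_mult ((*) :: 'a \<Rightarrow> 'a \<Rightarrow> 'a) ((*) :: 'b \<Rightarrow> 'b \<Rightarrow> 'b)"
  let ?G = "right_cong_gen ?m Z"
  have GC: "right_congruence ?m ?G" by (rule gen_cong)
  have ZG: "Z \<subseteq> ?G" by (rule gen_sub)
  have XA: "X \<subseteq> r_ann (*) a" using X gen_sub by blast
  have YB: "Y \<subseteq> r_ann (*) b" using Y gen_sub by blast
  have "r_ann ?m (a,b) = ?G"
  proof
    show "?G \<subseteq> r_ann ?m (a,b)"
    proof (rule gen_least[OF r_ann_prod_cong])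
      show "Z \<subseteq> r_ann ?m (a, b)" using XA YB
        by (auto simp: Z_def r_ann_def prod_mult_def)
    qed
  next
    show "r_ann ?m (a,b) \<subseteq> ?G"
    proof
      fix PQ assume PQ: "PQ \<in> r_ann ?m (a,b)"
      obtain s s' t t' where pq: "PQ = ((s,s'),(t,t'))" by (metis prod.collapse)
      have e1: "a * s = a * t" and e2: "b * s' = b * t'" using PQ pq by (auto simp: r_ann_def prod_mult_def)
      define \<rho> where "\<rho> = {(u,v). ((u,s'),(v,s')) \<in> ?G}"
      have rc1: "right_congruence ((*) :: 'a \<Rightarrow> _) \<rho>"
      proof (rule rc_intro)
        fix u v w assume "(u,v) \<in> \<rho>"
        then have "(?m (u,s') (w,1), ?m (v,s') (w,1)) \<in> ?G" using rc_elim(4)[OF GC] by (simp add: \<rho>_def)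
        then show "(u*w, v*w) \<in> \<rho>" by (simp add: \<rho>_def prod_mult_def)
      next
        show "\<And>x. (x,x) \<in> \<rho>" using rc_elim(1)[OF GC] by (simp add: \<rho>_def)
      next
        show "\<And>x y. (x,y) \<in> \<rho> \<Longrightarrow> (y,x) \<in> \<rho>" using rc_elim(2)[OF GC] by (simp add: \<rho>_def)
      next
        show "\<And>x y z. (x,y) \<in> \<rho> \<Longrightarrow> (y,z) \<in> \<rho> \<Longrightarrow> (x,z) \<in> \<rho>" using rc_elim(3)[OF GC] by (simp add: \<rho>_def)
      qed
      have "X \<subseteq> \<rho>"
      proof
        fix xy assume "xy \<in> X"
        then obtain x y where xy: "xy = (x,y)" "(x,y) \<in> X" by (metis prod.collapse)
        then have "((x,1),(y,1)) \<in> ?G" using ZG by (force simp: Z_def)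
        then have "(?m (x,1) (1,s'), ?m (y,1) (1,s')) \<in> ?G" using rc_elim(4)[OF GC] by blast
        then show "xy \<in> \<rho>" using xy by (simp add: \<rho>_def prod_mult_def)
      qed
      then have "right_cong_gen (*) X \<subseteq> \<rho>" by (rule gen_least[OF rc1])
      then have h1: "((s,s'),(t,s')) \<in> ?G" using X e1 by (auto simp: \<rho>_def r_ann_def)
      define \<sigma> where "\<sigma> = {(u,v). ((t,u),(t,v)) \<in> ?G}"
      have rc2: "right_congruence ((*) :: 'b \<Rightarrow> _) \<sigma>"
      proof (rule rc_intro)
        fix u v w assume "(u,v) \<in> \<sigma>"
        then have "(?m (t,u) (1,w), ?m (t,v) (1,w)) \<in> ?G" using rc_elim(4)[OF GC] by (simp add: \<sigma>_def)
        then show "(u*w, v*w) \<in> \<sigma>" by (simp add: \<sigma>_def prod_mult_def)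
      next
        show "\<And>x. (x,x) \<in> \<sigma>" using rc_elim(1)[OF GC] by (simp add: \<sigma>_def)
      next
        show "\<And>x y. (x,y) \<in> \<sigma> \<Longrightarrow> (y,x) \<in> \<sigma>" using rc_elim(2)[OF GC] by (simp add: \<sigma>_def)
      next
        show "\<And>x y z. (x,y) \<in> \<sigma> \<Longrightarrow> (y,z) \<in> \<sigma> \<Longrightarrow> (x,z) \<in> \<sigma>" using rc_elim(3)[OF GC] by (simp add: \<sigma>_def)
      qed
      have "Y \<subseteq> \<sigma>"
      proof
        fix xy assume "xy \<in> Y"
        then obtain x y where xy: "xy = (x,y)" "(x,y) \<in> Y" by (metis prod.collapse)
        then have "((1,x),(1,y)) \<in> ?G" using ZG by (force simp: Z_def)
        then have "(?m (1,x) (t,1), ?m (1,y) (t,1)) \<in> ?G" using rc_elim(4)[OF GC] by blast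
        then show "xy \<in> \<sigma>" using xy by (simp add: \<sigma>_def prod_mult_def)
      qed
      then have "right_cong_gen (*) Y \<subseteq> \<sigma>" by (rule gen_least[OF rc2])
      then have h2: "((t,s'),(t,t')) \<in> ?G" using Y e2 by (auto simp: \<sigma>_def r_ann_def)
      show "PQ \<in> ?G" using rc_elim(3)[OF GC h1 h2] pq by simp
    qed
  qed
  moreover have "finite Z" using Xf Yf unfolding Z_def by simp
  ultimately show "\<exists>Z. finite Z \<and> r_ann ?m ab = right_cong_gen ?m Z" using ab by blast
qed

theorem mainTheorem8:
  shows "finitely_right_equated
           (prod_mult ((*) :: 'a::monoid_mult \<Rightarrow> 'a \<Rightarrow> 'a) ((*) :: 'b::monoid_mult \<Rightarrow> 'b \<Rightarrow> 'b))
         \<longleftrightarrow> finitely_right_equated ((*) :: 'a \<Rightarrow> 'a \<Rightarrow> 'a)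
           \<and> finitely_right_equated ((*) :: 'b \<Rightarrow> 'b \<Rightarrow> 'b)"
  using left_dir right_dir back_dir by blast

end
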